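(* Let $r>0$, $p\in(0,1)$ and let $\boldsymbol{\mu}=(\mu_s)_{s\ge1}$ be the zero-truncated negative binomial distribution $\mu_s=\gamma\,\dfrac{\Gamma(s+r)\,p^s}{\Gamma(r)\,s!}$, $s\ge1$, with $\gamma=\dfrac{(1-p)^r}{1-(1-p)^r}$. Let $\Pi_n\sim ESC_{[n]}(\boldsymbol{\mu})$ with allocation variables $\mathbf{z}$. For $i\in[n]$, with $K_{-i}$ the number of clusters of $\mathbf{z}_{-i}$ and $S_j$ the size of cluster $j$ in $\mathbf{z}_{-i}$, $$\mathbb{P}(z_i=j\mid\mathbf{z}_{-i})\propto\begin{cases}S_j+r, & j=1,\dots,K_{-i},\\ (K_{-i}+1)\,\gamma\, r, & j=K_{-i}+1\ \text{(new cluster)}.\end{cases}$$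
   Context: For a fixed distribution $\boldsymbol{\mu}$ on the positive integers with $\mu_1>0$, $ESC_{[n]}(\boldsymbol{\mu})$ is the law of the following random partition of $[n]$: let $S_1,S_2,\dots$ be i.i.d. with law $\boldsymbol{\mu}$, condition on the event that $\sum_{j=1}^k S_j=n$ for some $k$, let $K$ be that $k$, and let $(z_1,\dots,z_n)$ be a uniformly random permutation of the vector with $S_1$ copies of $1$, ..., $S_K$ copies of $K$; the partition has blocks $\{i:z_i=j\}$. $\mathbf{z}_{-i}$ denotes the allocations of all points other than $i$; the statement concerns which cluster of $\mathbf{z}_{-i}$ point $i$ joins, or whether it forms a new cluster, with proportionality constant independent of $j$. *)

theory Defs
  imports "HOL-Probability.Probability" "HOL-Combinatorics.Permutations"
begin

text \<open>Exchangeable sequence of clusters ESC_[n](mu): draw S_1,...,S_n i.i.d. from M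
 (the event that some partial sum hits n depends only on the first n draws, since all
 S_j are at least 1), condition on the event that some partial sum equals n, let K be
 the corresponding index, and apply a uniformly random permutation of positions to the
 vector with S_1 copies of 1, ..., S_K copies of K.  Points are indexed 0..n-1.\<close>

definition ESC :: "nat \<Rightarrow> nat pmf \<Rightarrow> nat list pmf" where
  "ESC n M =
     bind_pmf (cond_pmf (Pi_pmf {..<n} 0 (\<lambda>_. M)) {S. \<exists>k\<le>n. (\<Sum>j<k. S j) = n})
       (\<lambda>S. let K = (THE k. k \<le> n \<and> (\<Sum>j<k. S j) = n);
                v = concat (map (\<lambda>j. replicate (S j) (Suc j)) [0..<K])
            in map_pmf (\<lambda>\<sigma>. permute_list \<sigma> v) (pmf_of_set {\<sigma>. \<sigma> permutes {..<n}}))"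

definition ztnb_gamma :: "real \<Rightarrow> real \<Rightarrow> real" where
  "ztnb_gamma r p = (1 - p) powr r / (1 - (1 - p) powr r)"

definition ztnb_mu :: "real \<Rightarrow> real \<Rightarrow> nat \<Rightarrow> real" where
  "ztnb_mu r p s =
     (if 1 \<le> s then ztnb_gamma r p * Gamma (real s + r) * p ^ s / (Gamma r * fact s) else 0)"

definition ztnb_pmf :: "real \<Rightarrow> real \<Rightarrow> nat pmf" where
  "ztnb_pmf r p = embed_pmf (ztnb_mu r p)"

text \<open>Allocations of all points other than i (i removed), and order-preserving
 relabelling of cluster labels to 1..K.\<close>

definition del_at :: "nat \<Rightarrow> 'a list \<Rightarrow> 'a list" where
  "del_at i z = take i z @ drop (Suc i) z"

definition compress :: "nat list \<Rightarrow> nat list" where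
  "compress ys = map (\<lambda>y. card {y' \<in> set ys. y' \<le> y}) ys"

end

theory Submission imports Defs "HOL-Combinatorics.Multiset_Permutations" begin



lemma fib_card_eq:
  assumes s0: "s0 permutes {..<length v}" and z: "permute_list s0 v = z"
  shows "card {s. s permutes {..<length v} \<and> permute_list s v = z}
       = card {s. s permutes {..<length v} \<and> permute_list s v = v}"
proof -
  let ?N = "{..<length v}"
  have "bij_betw (\<lambda>t. t \<circ> s0) {s. s permutes ?N \<and> permute_list s v = v}
          {s. s permutes ?N \<and> permute_list s v = z}"
  proof (rule bij_betw_byWitness[where f' = "\<lambda>s. s \<circ> inv s0"])
    show "\<forall>a\<in>{s. s permutes ?N \<and> permute_list s v = v}. (a \<circ> s0) \<circ> inv s0 = a"
      using s0 by (auto simp: o_assoc[symmetric] permutes_inv_o)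
    show "\<forall>a\<in>{s. s permutes ?N \<and> permute_list s v = z}. (a \<circ> inv s0) \<circ> s0 = a"
      using s0 by (auto simp: o_assoc[symmetric] permutes_inv_o)
    show "(\<lambda>t. t \<circ> s0) ` {s. s permutes ?N \<and> permute_list s v = v} \<subseteq> {s. s permutes ?N \<and> permute_list s v = z}"
      using s0 z by (auto simp: permutes_compose permute_list_compose)
    show "(\<lambda>s. s \<circ> inv s0) ` {s. s permutes ?N \<and> permute_list s v = z} \<subseteq> {s. s permutes ?N \<and> permute_list s v = v}"
    proof (rule image_subsetI)
      fix s assume "s \<in> {s. s permutes ?N \<and> permute_list s v = z}"
      hence s: "s permutes ?N" "permute_list s v = z" by simp_all
      have i: "inv s0 permutes ?N" using s0 by (simp add: permutes_inv)
      have "permute_list (s \<circ> inv s0) v = permute_list (inv s0) z"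
        using i s by (simp add: permute_list_compose)
      also have "\<dots> = permute_list (inv s0) (permute_list s0 v)" using z by simp
      also have "\<dots> = permute_list (s0 \<circ> inv s0) v"
        using i by (simp add: permute_list_compose)
      also have "\<dots> = v" using s0 by (simp add: permutes_inv_o)
      finally show "s \<circ> inv s0 \<in> {s. s permutes ?N \<and> permute_list s v = v}"
        using s i by (simp add: permutes_compose)
    qed
  qed
  thus ?thesis by (simp add: bij_betw_same_card)
qed

lemma stab_card:
  "card {s. s permutes {..<length v} \<and> permute_list s v = v}
     = (\<Prod>x\<in>set_mset (mset v). fact (count (mset v) x))"
proof -
  let ?N = "{..<length v}"
  let ?F = "\<lambda>y. {s. s permutes ?N \<and> permute_list s v = y}"
  let ?PM = "permutations_of_multiset (mset v)"
  have U: "{s. s permutes ?N} = (\<Union>y\<in>?PM. ?F y)"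
    by (auto simp: permutations_of_multisetI)
  have "fact (length v) = card {s. s permutes ?N}"
    by (simp add: card_permutations)
  also have "\<dots> = (\<Sum>y\<in>?PM. card (?F y))"
    unfolding U by (rule card_UN_disjoint) (auto simp: finite_permutations_of_multiset
          intro: finite_subset[OF _ finite_permutations[of ?N]])
  also have "\<dots> = (\<Sum>y\<in>?PM. card (?F v))"
  proof (rule sum.cong[OF refl])
    fix y assume "y \<in> ?PM"
    hence "mset y = mset v" by (simp add: permutations_of_multisetD)
    then obtain s0 where "s0 permutes ?N" "permute_list s0 v = y"
      by (metis mset_eq_permutation)
    thus "card (?F y) = card (?F v)" by (rule fib_card_eq)
  qed
  also have "\<dots> = card ?PM * card (?F v)" by simp
  finally have 1: "fact (length v) = card ?PM * card (?F v)" .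
  have 2: "card ?PM * (\<Prod>x\<in>set_mset (mset v). fact (count (mset v) x)) = fact (length v)"
    using card_permutations_of_multiset_aux[of "mset v"] by simp
  have "card ?PM > 0"
    using finite_permutations_of_multiset[of "mset v"] permutations_of_multisetI[of v "mset v"]
    by (auto simp: card_gt_0_iff)
  with 1 2 show ?thesis by (metis mult_left_cancel not_gr0)
qed

lemma perm_pmf:
  assumes "length v = n"
  shows "pmf (map_pmf (\<lambda>\<sigma>. permute_list \<sigma> v) (pmf_of_set {\<sigma>. \<sigma> permutes {..<n}})) z
     = (if mset z = mset v then (\<Prod>x\<in>set_mset (mset v). fact (count (mset v) x)) / fact n else 0)"
proof -
  let ?P = "{\<sigma>. \<sigma> permutes {..<n}}"
  have fin: "finite ?P" "?P \<noteq> {}" by (auto intro: finite_permutations permutes_id)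
  have "pmf (map_pmf (\<lambda>\<sigma>. permute_list \<sigma> v) (pmf_of_set ?P)) z
      = card (?P \<inter> (\<lambda>\<sigma>. permute_list \<sigma> v) -` {z}) / card ?P"
    using fin by (simp add: pmf_map measure_pmf_of_set)
  also have "card ?P = fact n" by (simp add: card_permutations)
  also have "?P \<inter> (\<lambda>\<sigma>. permute_list \<sigma> v) -` {z} = {s. s permutes {..<length v} \<and> permute_list s v = z}"
    using assms by auto
  finally have e: "pmf (map_pmf (\<lambda>\<sigma>. permute_list \<sigma> v) (pmf_of_set ?P)) z =
     real (card {s. s permutes {..<length v} \<and> permute_list s v = z}) / fact n" by simp
  show ?thesis
  proof (cases "mset z = mset v")
    case True
    then obtain s0 where "s0 permutes {..<length v}" "permute_list s0 v = z"
      by (metis mset_eq_permutation)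
    from fib_card_eq[OF this] stab_card[of v] True e show ?thesis by simp
  next
    case False
    hence "{s. s permutes {..<length v} \<and> permute_list s v = z} = {}" by auto
    with False e show ?thesis by simp
  qed
qed



definition Eset :: "nat \<Rightarrow> (nat \<Rightarrow> nat) set" where
  "Eset n = {S. \<exists>k\<le>n. (\<Sum>j<k. S j) = n}"
definition Kof :: "nat \<Rightarrow> (nat \<Rightarrow> nat) \<Rightarrow> nat" where
  "Kof n S = (THE k. k \<le> n \<and> (\<Sum>j<k. S j) = n)"
definition vecS :: "nat \<Rightarrow> (nat \<Rightarrow> nat) \<Rightarrow> nat list" where
  "vecS n S = concat (map (\<lambda>j. replicate (S j) (Suc j)) [0..<Kof n S])"

lemma ESC_alt: "ESC n M = bind_pmf (cond_pmf (Pi_pmf {..<n} 0 (\<lambda>_. M)) (Eset n))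
   (\<lambda>S. map_pmf (\<lambda>\<sigma>. permute_list \<sigma> (vecS n S)) (pmf_of_set {\<sigma>. \<sigma> permutes {..<n}}))"
  by (simp add: ESC_def Kof_def vecS_def Let_def Eset_def)

lemma count_vec: "count (mset (concat (map (\<lambda>j. replicate (S j) (Suc j)) [0..<K]))) x
   = (if 1 \<le> x \<and> x \<le> K then S (x - 1) else 0)"
  by (induction K) auto

lemma length_vec: "length (concat (map (\<lambda>j. replicate (S j) (Suc j)) [0..<K])) = (\<Sum>j<K. S j)"
  by (induction K) auto

lemma psum_mono:
  fixes S :: "nat \<Rightarrow> nat" and n k k' :: nat
  assumes "\<And>j. j < n \<Longrightarrow> S j \<ge> 1" "k \<le> k'" "k' \<le> n"
  shows "(\<Sum>j<k'. S j) \<ge> (\<Sum>j<k. S j) + (k' - k)"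
  using assms(2,3)
proof (induction k' rule: dec_induct)
  case base then show ?case by simp
next
  case (step m)
  then have "S m \<ge> 1" using assms(1) by simp
  with step show ?case by (simp add: Suc_diff_le)
qed

lemma Kof_eq:
  assumes "\<And>j. j < n \<Longrightarrow> S j \<ge> 1" "k \<le> n" "(\<Sum>j<k. S j) = n"
  shows "Kof n S = k"
  unfolding Kof_def
proof (rule the_equality)
  show "k \<le> n \<and> (\<Sum>j<k. S j) = n" using assms by simp
  fix k' assume k': "k' \<le> n \<and> (\<Sum>j<k'. S j) = n"
  show "k' = k"
  proof (rule ccontr)
    assume "k' \<noteq> k"
    then consider "k < k'" | "k' < k" by linarith
    thus False
    proof cases
      case 1 with psum_mono[of n S k k', OF assms(1)] k' assms show False by simp
    next
      case 2 with psum_mono[of n S k' k, OF assms(1)] k' assms show False by simp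
    qed
  qed
qed

lemma supp_Pi:
  fixes S :: "nat \<Rightarrow> nat" and n :: nat
  assumes "S \<in> set_pmf (Pi_pmf {..<n} 0 (\<lambda>_. M))" "pmf M 0 = 0"
  shows "\<And>j. j < n \<Longrightarrow> S j \<ge> 1" "\<And>j. j \<ge> n \<Longrightarrow> S j = 0"
    "\<And>j. j < n \<Longrightarrow> S j \<in> set_pmf M"
proof -
  have S: "S \<in> PiE_dflt {..<n} 0 (set_pmf \<circ> (\<lambda>_. M))"
  proof -
    have "set_pmf (Pi_pmf {..<n} 0 (\<lambda>_. M)) = PiE_dflt {..<n} 0 (set_pmf \<circ> (\<lambda>_. M))"
      by (rule set_Pi_pmf) simp
    with assms(1) show ?thesis by simp
  qed
  show "\<And>j. j < n \<Longrightarrow> S j \<in> set_pmf M" using S by (auto simp: PiE_dflt_def)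
  show "\<And>j. j \<ge> n \<Longrightarrow> S j = 0" using S by (auto simp: PiE_dflt_def)
  fix j assume "j < n"
  hence "S j \<in> set_pmf M" using S by (auto simp: PiE_dflt_def)
  moreover have "0 \<notin> set_pmf M" using assms(2) by (simp add: set_pmf_iff)
  ultimately show "S j \<ge> 1" by (metis less_one not_le)
qed

lemma vec_props:
  assumes "S \<in> set_pmf (Pi_pmf {..<n} 0 (\<lambda>_. M))" "pmf M 0 = 0" "S \<in> Eset n"
  shows "Kof n S \<le> n" "(\<Sum>j<Kof n S. S j) = n" "length (vecS n S) = n"
    "\<And>x. count (mset (vecS n S)) x = (if 1 \<le> x \<and> x \<le> Kof n S then S (x - 1) else 0)"
    "set (vecS n S) = {1..Kof n S}"
proof -
  obtain k where k: "k \<le> n" "(\<Sum>j<k. S j) = n" using assms(3) by (auto simp: Eset_def)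
  have K: "Kof n S = k" by (rule Kof_eq[OF supp_Pi(1)[OF assms(1,2)] k])
  show "Kof n S \<le> n" "(\<Sum>j<Kof n S. S j) = n" using k K by simp_all
  show "length (vecS n S) = n" using k K by (simp add: vecS_def length_vec)
  show c: "\<And>x. count (mset (vecS n S)) x = (if 1 \<le> x \<and> x \<le> Kof n S then S (x - 1) else 0)"
    by (simp add: vecS_def count_vec)
  show "set (vecS n S) = {1..Kof n S}"
  proof (rule set_eqI)
    fix x
    have "x \<in> set (vecS n S) \<longleftrightarrow> count (mset (vecS n S)) x > 0" by simp
    also have "\<dots> \<longleftrightarrow> x \<in> {1..Kof n S}"
    proof (cases "1 \<le> x \<and> x \<le> k")
      case True
      then have "x - 1 < n" using k by linarith
      then show ?thesis using c[of x] supp_Pi(1)[OF assms(1,2), of "x - 1"] K True by auto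
    qed (use c[of x] K in auto)
    finally show "x \<in> set (vecS n S) \<longleftrightarrow> x \<in> {1..Kof n S}" .
  qed
qed




lemma sum_counts_valid:
  fixes z :: "nat list"
  assumes "set z = {1..K}"
  shows "(\<Sum>j<K. count (mset z) (Suc j)) = length z"
proof -
  have "(\<Sum>j<K. count (mset z) (Suc j)) = (\<Sum>y\<in>Suc ` {..<K}. count (mset z) y)"
    by (simp add: sum.reindex)
  also have "Suc ` {..<K} = set_mset (mset z)" using assms by (simp add: image_Suc_lessThan)
  also have "(\<Sum>y\<in>set_mset (mset z). count (mset z) y) = size (mset z)"
    by (simp add: size_multiset_overloaded_eq)
  finally show ?thesis by simp
qed

lemma pmf_ESC:
  fixes M :: "nat pmf" and z :: "nat list"
  assumes M0: "pmf M 0 = 0" and M1: "pmf M 1 > 0"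
  shows "pmf (ESC n M) z = (if length z = n \<and> set z = {1..card (set z)} then
     (\<Prod>y\<in>set z. pmf M (count (mset z) y) * fact (count (mset z) y)) /
       (fact n * measure_pmf.prob (Pi_pmf {..<n} 0 (\<lambda>_. M)) (Eset n)) else 0)"
proof -
  define P where "P = Pi_pmf {..<n} 0 (\<lambda>_. M)"
  define E where "E = Eset n"
  define F where "F = {S. mset z = mset (vecS n S)}"
  define c where "c = (\<Prod>x\<in>set z. fact (count (mset z) x)) / (fact n :: real)"
  define S0 :: "nat \<Rightarrow> nat" where "S0 = (\<lambda>j. if j < n then 1 else 0)"
  have "pmf P S0 = (\<Prod>x<n. pmf M (S0 x))"
    unfolding P_def by (subst pmf_Pi) (auto simp: S0_def)
  also have "\<dots> > 0" using M1 by (intro prod_pos) (simp add: S0_def)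
  finally have "S0 \<in> set_pmf P" by (simp add: set_pmf_iff)
  moreover have "S0 \<in> E" unfolding E_def Eset_def S0_def by (intro CollectI exI[of _ n]) simp
  ultimately have ne: "set_pmf P \<inter> E \<noteq> {}" by blast
  have PE: "measure_pmf.prob P E > 0"
  proof -
    from ne obtain x where "x \<in> set_pmf P" "x \<in> E" by blast
    thus ?thesis by (rule measure_pmf_posI)
  qed
  have "pmf (ESC n M) z = (\<integral>S. pmf (map_pmf (\<lambda>\<sigma>. permute_list \<sigma> (vecS n S))
           (pmf_of_set {\<sigma>. \<sigma> permutes {..<n}})) z \<partial>measure_pmf (cond_pmf P E))"
    by (simp add: ESC_alt pmf_bind P_def E_def)
  also have "\<dots> = (\<integral>S. c * indicator F S \<partial>measure_pmf (cond_pmf P E))"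
  proof (intro integral_cong_AE AE_pmfI)
    fix S assume "S \<in> set_pmf (cond_pmf P E)"
    hence S: "S \<in> set_pmf P" "S \<in> E" using ne by auto
    have len: "length (vecS n S) = n"
      using vec_props(3)[OF S(1)[unfolded P_def] M0 S(2)[unfolded E_def]] .
    show "pmf (map_pmf (\<lambda>\<sigma>. permute_list \<sigma> (vecS n S)) (pmf_of_set {\<sigma>. \<sigma> permutes {..<n}})) z
        = c * indicator F S"
      by (simp add: perm_pmf[OF len] F_def c_def) (metis set_mset_mset)
  qed simp_all
  also have "\<dots> = c * measure_pmf.prob (cond_pmf P E) F" by simp
  also have "measure_pmf.prob (cond_pmf P E) F = measure_pmf.prob P (E \<inter> F) / measure_pmf.prob P E"
    using ne PE by (simp add: cond_pmf.rep_eq measure_uniform_measure measure_pmf.emeasure_eq_measure)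
  finally have main: "pmf (ESC n M) z = c * (measure_pmf.prob P (E \<inter> F) / measure_pmf.prob P E)" .
  have supp: "length z = n \<and> set z = {1..card (set z)} \<and> Kof n S = card (set z) \<and>
      (\<forall>j<card (set z). S j = count (mset z) (Suc j))"
    if S: "S \<in> set_pmf P" "S \<in> E" "S \<in> F" for S
  proof -
    note vp = vec_props[OF S(1)[unfolded P_def] M0 S(2)[unfolded E_def]]
    have m: "mset z = mset (vecS n S)" using S(3) by (simp add: F_def)
    have sz: "set z = {1..Kof n S}" using m vp(5) by (metis set_mset_mset)
    show ?thesis using vp m sz by (auto dest: mset_eq_length)
  qed
  show ?thesis
  proof (cases "length z = n \<and> set z = {1..card (set z)}")
    case False
    have "measure_pmf.prob P (E \<inter> F) = measure_pmf.prob P {}"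
      by (rule measure_prob_cong_0) (use supp False in \<open>auto simp: set_pmf_iff\<close>)
    then have "pmf (ESC n M) z = 0" using main by simp
    then show ?thesis by (simp only: if_not_P[OF False])
  next
    case True
    define K where "K = card (set z)"
    have Kz: "set z = {1..K}" and lz: "length z = n" using True by (simp_all add: K_def)
    have Kn: "K \<le> n" using lz card_length[of z] by (simp add: K_def)
    define B where "B = (\<lambda>j. if j < K then {count (mset z) (Suc j)} else (UNIV :: nat set))"
    have "measure_pmf.prob P (E \<inter> F) = measure_pmf.prob P (Pi {..<n} B)"
    proof (rule measure_prob_cong_0)
      fix S assume "S \<in> E \<inter> F - Pi {..<n} B"
      then show "pmf P S = 0" using supp[of S] by (auto simp: set_pmf_iff B_def K_def)
    next
      fix S assume S: "S \<in> Pi {..<n} B - E \<inter> F"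
      show "pmf P S = 0"
      proof (rule ccontr)
        assume "pmf P S \<noteq> 0"
        hence Ss: "S \<in> set_pmf P" by (simp add: set_pmf_iff)
        have Sj: "\<And>j. j < K \<Longrightarrow> S j = count (mset z) (Suc j)"
        proof -
          fix j assume j: "j < K"
          hence "j < n" using Kn by simp
          hence "S j \<in> B j" using S by (auto simp: Pi_def)
          thus "S j = count (mset z) (Suc j)" using j by (simp add: B_def)
        qed
        have sumK: "(\<Sum>j<K. S j) = n"
          using Sj sum_counts_valid[OF Kz] lz by simp
        hence SE: "S \<in> E" using Kn by (auto simp: E_def Eset_def)
        note vp = vec_props[OF Ss[unfolded P_def] M0 SE[unfolded E_def]]
        have KK: "Kof n S = K"
          by (rule Kof_eq[OF supp_Pi(1)[OF Ss[unfolded P_def] M0] Kn sumK])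
        have "mset z = mset (vecS n S)"
        proof (rule multiset_eqI)
          fix x
          show "count (mset z) x = count (mset (vecS n S)) x"
          proof (cases "1 \<le> x \<and> x \<le> K")
            case True
            then show ?thesis using vp(4)[of x] KK Sj[of "x - 1"] by auto
          next
            case False
            then have "x \<notin> set z" using Kz by auto
            then have z0: "count (mset z) x = 0" by (simp add: count_mset_0_iff)
            have v0: "count (mset (vecS n S)) x = 0" using vp(4)[of x] KK False by auto
            show ?thesis by (simp only: z0 v0)
          qed
        qed
        with S SE show False by (auto simp: F_def)
      qed
    qed
    also have "\<dots> = (\<Prod>j<n. measure_pmf.prob M (B j))"
      unfolding P_def by (rule measure_Pi_pmf_Pi) simp
    also have "\<dots> = (\<Prod>j<K. pmf M (count (mset z) (Suc j)))"
    proof -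
      have "(\<Prod>j<n. measure_pmf.prob M (B j)) = (\<Prod>j<K. measure_pmf.prob M (B j))"
        by (rule prod.mono_neutral_right) (use Kn in \<open>auto simp: B_def\<close>)
      also have "\<dots> = (\<Prod>j<K. pmf M (count (mset z) (Suc j)))"
        by (intro prod.cong) (auto simp: B_def measure_pmf_single)
      finally show ?thesis .
    qed
    also have "\<dots> = (\<Prod>y\<in>set z. pmf M (count (mset z) y))"
    proof -
      have "(\<Prod>j<K. pmf M (count (mset z) (Suc j))) = (\<Prod>y\<in>Suc ` {..<K}. pmf M (count (mset z) y))"
        by (simp add: prod.reindex)
      also have "Suc ` {..<K} = set z" using Kz by (simp add: image_Suc_lessThan)
      finally show ?thesis .
    qed
    finally have e: "measure_pmf.prob P (E \<inter> F) = (\<Prod>y\<in>set z. pmf M (count (mset z) y))" .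
    show ?thesis unfolding P_def[symmetric] E_def[symmetric] using True PE
      by (simp add: main e c_def prod.distrib field_simps)
  qed
qed




lemma ztnb_gamma_pos: "0 < r \<Longrightarrow> 0 < p \<Longrightarrow> p < 1 \<Longrightarrow> ztnb_gamma r p > 0"
proof -
  assume a: "0 < r" "0 < p" "p < 1"
  have "(1 - p) powr r < 1 powr r" using a by (intro powr_less_mono2) auto
  moreover have "(1 - p) powr r > 0" using a by simp
  ultimately show ?thesis by (simp add: ztnb_gamma_def)
qed

lemma ztnb_sums:
  assumes r: "0 < r" and p: "0 < p" "p < 1"
  shows "ztnb_mu r p sums 1"
proof -
  define a where "a = (\<lambda>s::nat. Gamma (real s + r) * p ^ s / (Gamma r * fact s))"
  have rn: "r \<notin> \<int>\<^sub>\<le>\<^sub>0" using r nonpos_Ints_nonpos by fastforce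
  have aeq: "a s = ((- r) gchoose s) * (- p) ^ s" for s
  proof -
    have Gr: "Gamma r > 0" using r by simp
    have "Gamma (real s + r) = pochhammer r s * Gamma r"
      using pochhammer_Gamma[OF rn, of s] Gr by (simp add: add.commute field_simps)
    moreover have "((- r) gchoose s) * (- p) ^ s = pochhammer r s * p ^ s / fact s"
      by (simp add: gbinomial_pochhammer power_mult_distrib[symmetric])
    ultimately show ?thesis unfolding a_def using Gr by (simp add: field_simps)
  qed
  have "(\<lambda>s. ((- r) gchoose s) * (- p) ^ s) sums (1 + - p) powr (- r)"
    by (rule gen_binomial_real) (use p in simp)
  moreover have "a = (\<lambda>s. ((- r) gchoose s) * (- p) ^ s)" using aeq by (rule ext)
  ultimately have A: "a sums (1 - p) powr (- r)" by simp
  define q where "q = (1 - p) powr r"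
  have "(1 - p) powr r < 1 powr r" using p r by (intro powr_less_mono2) auto
  hence q: "0 < q" "q < 1" using p r by (auto simp: q_def)
  have "(1 - p) powr (- r) = 1 / q" by (simp add: q_def powr_minus divide_inverse)
  with A have A': "a sums (1 / q)" by simp
  have Gr0: "Gamma r \<noteq> 0" using Gamma_real_pos[OF r] by linarith
  have a0: "a 0 = 1" by (simp add: a_def Gr0)
  have "(\<lambda>s. a (Suc s)) sums (1 / q - 1)" using A' a0 sums_Suc_iff[of a "1/q - 1"] by simp
  hence "(\<lambda>s. ztnb_gamma r p * a (Suc s)) sums (ztnb_gamma r p * (1 / q - 1))"
    by (rule sums_mult)
  moreover have "ztnb_gamma r p * (1 / q - 1) = 1"
    using q by (simp add: ztnb_gamma_def q_def[symmetric] field_simps)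
  moreover have "ztnb_gamma r p * a (Suc s) = ztnb_mu r p (Suc s)" for s
    by (simp add: ztnb_mu_def a_def)
  ultimately have "(\<lambda>s. ztnb_mu r p (Suc s)) sums 1" by simp
  thus ?thesis using sums_Suc_iff[of "ztnb_mu r p" 1] by (simp add: ztnb_mu_def)
qed

lemma ztnb_mu_nonneg: "0 < r \<Longrightarrow> 0 < p \<Longrightarrow> p < 1 \<Longrightarrow> ztnb_mu r p s \<ge> 0"
  using ztnb_gamma_pos[of r p] by (auto simp: ztnb_mu_def intro!: divide_nonneg_pos mult_nonneg_nonneg)

lemma pmf_ztnb:
  assumes r: "0 < r" and p: "0 < p" "p < 1"
  shows "pmf (ztnb_pmf r p) s = ztnb_mu r p s"
  unfolding ztnb_pmf_def
proof (rule pmf_embed_pmf)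
  show "\<And>x. 0 \<le> ztnb_mu r p x" using ztnb_mu_nonneg[OF assms] .
  have "(\<integral>\<^sup>+x. ennreal (ztnb_mu r p x) \<partial>count_space UNIV) = (\<Sum>x. ennreal (ztnb_mu r p x))"
    by (rule nn_integral_count_space_nat)
  also have "\<dots> = ennreal 1"
    using ztnb_sums[OF assms] ztnb_mu_nonneg[OF assms]
    by (subst suminf_ennreal2) (auto simp: sums_iff)
  finally show "(\<integral>\<^sup>+x. ennreal (ztnb_mu r p x) \<partial>count_space UNIV) = 1" by simp
qed




definition ins :: "nat \<Rightarrow> 'a \<Rightarrow> 'a list \<Rightarrow> 'a list" where
  "ins i x ys = take i ys @ x # drop i ys"
definition sh :: "nat \<Rightarrow> nat \<Rightarrow> nat" where
  "sh l y = (if l \<le> y then Suc y else y)"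
definition unsh :: "nat \<Rightarrow> nat \<Rightarrow> nat" where
  "unsh l y = (if l < y then y - 1 else y)"

lemma sh_le_iff: "sh l a \<le> sh l b \<longleftrightarrow> a \<le> b"
  by (auto simp: sh_def)
lemma inj_sh: "inj (sh l)"
  by (auto simp: inj_def sh_def split: if_splits)
lemma sh_neq: "sh l y \<noteq> l"
  by (auto simp: sh_def)
lemma sh_unsh: "y \<noteq> l \<Longrightarrow> sh l (unsh l y) = y"
  by (auto simp: sh_def unsh_def)

lemma compress_id:
  assumes "set ys = {1..m}"
  shows "compress ys = ys"
proof -
  have "card {y' \<in> set ys. y' \<le> y} = y" if "y \<in> set ys" for y
  proof -
    have "{y' \<in> set ys. y' \<le> y} = {1..y}" using assms that by auto
    thus ?thesis by simp
  qed
  thus ?thesis unfolding compress_def by (intro map_idI) auto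
qed

lemma compress_sh:
  assumes "set xs = {1..m}"
  shows "compress (map (sh l) xs) = xs"
proof -
  have "card {y' \<in> set (map (sh l) xs). y' \<le> sh l y} = y" if "y \<in> set xs" for y
  proof -
    have "{y' \<in> set (map (sh l) xs). y' \<le> sh l y} = sh l ` {1..y}"
      using assms that by (auto simp: sh_le_iff)
    also have "card \<dots> = y" using inj_sh[of l] by (simp add: card_image inj_on_subset)
    finally show ?thesis .
  qed
  thus ?thesis unfolding compress_def by (simp add: map_idI)
qed

lemma del_at_ins: "i \<le> length ys \<Longrightarrow> del_at i (ins i x ys) = ys"
  by (simp add: del_at_def ins_def)
lemma nth_ins: "i \<le> length ys \<Longrightarrow> ins i x ys ! i = x"
  by (simp add: ins_def nth_append)
lemma length_ins: "length (ins i x ys) = Suc (length ys)"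
  by (simp add: ins_def)
lemma set_ins: "set (ins i x ys) = insert x (set ys)"
  by (simp add: ins_def) (metis append_take_drop_id set_append Un_commute Un_assoc insert_is_Un Un_insert_left)
lemma mset_ins: "mset (ins i x ys) = add_mset x (mset ys)"
  by (simp add: ins_def) (metis append_take_drop_id mset_append union_mset_add_mset_right)
lemma ins_del_at: "i < length z \<Longrightarrow> ins i (z ! i) (del_at i z) = z"
  by (simp add: ins_def del_at_def min_def id_take_nth_drop[symmetric])
lemma length_del_at: "i < length z \<Longrightarrow> length (del_at i z) = length z - 1"
  by (simp add: del_at_def)
lemma set_z_del: "i < length z \<Longrightarrow> set z = insert (z ! i) (set (del_at i z))"
  using set_ins[of i "z ! i" "del_at i z"] ins_del_at[of i z] by simp




lemma del_old:
  assumes "i < length z" "set z = {1..K}" "z ! i \<in> set (del_at i z)"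
  shows "set (del_at i z) = {1..K}" "compress (del_at i z) = del_at i z"
proof -
  show s: "set (del_at i z) = {1..K}" using set_z_del[OF assms(1)] assms by auto
  show "compress (del_at i z) = del_at i z" by (rule compress_id[OF s])
qed

lemma del_new:
  assumes "i < length z" "set z = {1..K}" "z ! i \<notin> set (del_at i z)"
  defines "l \<equiv> z ! i"
  defines "w' \<equiv> map (unsh l) (del_at i z)"
  shows "l \<in> {1..K}" "del_at i z = map (sh l) w'" "set w' = {1..K - 1}"
    "compress (del_at i z) = w'"
proof -
  have sz: "set z = insert l (set (del_at i z))" using set_z_del[OF assms(1)] by (simp add: l_def)
  show lK: "l \<in> {1..K}" using sz assms(2) by auto
  have sd: "set (del_at i z) = {1..K} - {l}" using sz assms(2,3) l_def by auto
  have "map (sh l \<circ> unsh l) (del_at i z) = del_at i z"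
    by (rule map_idI) (simp add: sh_unsh sd)
  then show d: "del_at i z = map (sh l) w'"
    unfolding w'_def by simp
  show sw: "set w' = {1..K - 1}"
  proof (rule set_eqI, rule iffI)
    fix x assume "x \<in> set w'"
    then obtain y where y0: "y \<in> set (del_at i z)" "x = unsh l y" by (auto simp: w'_def)
    hence y: "y \<in> {1..K} - {l}" "x = unsh l y" using sd by simp_all
    then show "x \<in> {1..K - 1}" using lK by (auto simp: unsh_def)
  next
    fix x assume x: "x \<in> {1..K - 1}"
    show "x \<in> set w'"
    proof (cases "x < l")
      case True
      then have "x \<in> {1..K} - {l}" "unsh l x = x" using x by (auto simp: unsh_def)
      then show ?thesis by (force simp: w'_def sd)
    next
      case False
      then have "Suc x \<in> {1..K} - {l}" "unsh l (Suc x) = x" using x by (auto simp: unsh_def)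
      then show ?thesis unfolding w'_def sd set_map by (metis image_eqI)
    qed
  qed
  show "compress (del_at i z) = w'" using d compress_sh[OF sw] by simp
qed

lemma w_valid:
  assumes "length z = n" "set z = {1..card (set z)}" "i < n" "compress (del_at i z) = w"
  shows "set w = {1..card (set w)}" "length w = n - 1"
proof -
  show "length w = n - 1" using assms by (auto simp: compress_def length_del_at)
  show "set w = {1..card (set w)}"
  proof (cases "z ! i \<in> set (del_at i z)")
    case True
    from del_old[OF _ assms(2) True] assms show ?thesis by auto
  next
    case False
    from del_new[OF _ assms(2) False] assms show ?thesis by auto
  qed
qed

lemma Ej_char:
  assumes w: "set w = {1..L}" "length w = n - 1" and i: "i < n" and j: "j \<in> {1..L}"
  shows "{z. compress (del_at i z) = w \<and> (\<exists>m<length w. w ! m = j \<and> z ! i = del_at i z ! m)}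
     \<inter> {z. length z = n \<and> set z = {1..card (set z)}} = {ins i j w}"
proof (rule set_eqI, rule iffI)
  fix z assume "z \<in> {z. compress (del_at i z) = w \<and> (\<exists>m<length w. w ! m = j \<and> z ! i = del_at i z ! m)}
     \<inter> {z. length z = n \<and> set z = {1..card (set z)}}"
  then obtain m where z: "compress (del_at i z) = w" "m < length w" "w ! m = j"
    "z ! i = del_at i z ! m" "length z = n" "set z = {1..card (set z)}" by auto
  have il: "i < length z" using z i by simp
  have "length (compress (del_at i z)) = length (del_at i z)" by (simp add: compress_def)
  hence "length (del_at i z) = length w" using z(1) by simp
  hence "z ! i \<in> set (del_at i z)" using z(2,4) by simp
  from del_old[OF il z(6) this] z(1) have d: "del_at i z = w" by simp
  have "z = ins i (z ! i) (del_at i z)" using ins_del_at[OF il] by simp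
  also have "z ! i = j" using z d by simp
  finally show "z \<in> {ins i j w}" using d by simp
next
  fix z assume "z \<in> {ins i j w}"
  hence z: "z = ins i j w" by simp
  have il: "i \<le> length w" using w i by simp
  have len: "length z = n" using z w i by (simp add: length_ins)
  have sz: "set z = {1..L}" using z w j by (auto simp: set_ins)
  have d: "del_at i z = w" using z del_at_ins[OF il] by simp
  obtain m where m: "m < length w" "w ! m = j" using j w by (metis in_set_conv_nth)
  have zi: "z ! i = j" using z nth_ins[OF il] by simp
  show "z \<in> {z. compress (del_at i z) = w \<and> (\<exists>m<length w. w ! m = j \<and> z ! i = del_at i z ! m)}
     \<inter> {z. length z = n \<and> set z = {1..card (set z)}}"
    using len sz d m zi compress_id[OF w(1)] by auto
qed

lemma New_char:
  assumes w: "set w = {1..L}" "length w = n - 1" and i: "i < n"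
  shows "{z. compress (del_at i z) = w \<and> z ! i \<notin> set (del_at i z)}
     \<inter> {z. length z = n \<and> set z = {1..card (set z)}} = (\<lambda>l. ins i l (map (sh l) w)) ` {1..L+1}"
proof (rule set_eqI, rule iffI)
  fix z assume "z \<in> {z. compress (del_at i z) = w \<and> z ! i \<notin> set (del_at i z)}
     \<inter> {z. length z = n \<and> set z = {1..card (set z)}}"
  then have z: "compress (del_at i z) = w" "z ! i \<notin> set (del_at i z)" "length z = n"
    "set z = {1..card (set z)}" by auto
  have il: "i < length z" using z i by simp
  note dn = del_new[OF il z(4) z(2)]
  have ww: "map (unsh (z ! i)) (del_at i z) = w" using dn(4) z(1) by simp
  have KL: "card (set z) = L + 1"
  proof -
    have e: "{1..card (set z) - 1} = {1..L}" by (metis dn(3) ww w(1))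
    have "card {1..card (set z) - 1} = card {1..L}" by (simp only: e)
    hence "card (set z) - 1 = L" by simp
    moreover have "card (set z) \<ge> 1" using dn(1) by auto
    ultimately show ?thesis by linarith
  qed
  have "z = ins i (z ! i) (del_at i z)" using ins_del_at[OF il] by simp
  also have "del_at i z = map (sh (z ! i)) w" using dn(2) ww by simp
  finally show "z \<in> (\<lambda>l. ins i l (map (sh l) w)) ` {1..L+1}" using dn(1) KL by auto
next
  fix z assume "z \<in> (\<lambda>l. ins i l (map (sh l) w)) ` {1..L+1}"
  then obtain l where l: "l \<in> {1..L+1}" and z: "z = ins i l (map (sh l) w)" by auto
  have il: "i \<le> length (map (sh l) w)" using w i by simp
  have len: "length z = n" using z w i by (simp add: length_ins)
  have "set z = insert l (sh l ` {1..L})" using z w by (simp add: set_ins)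
  also have "\<dots> = {1..L+1}"
  proof (rule set_eqI, rule iffI)
    fix x assume "x \<in> insert l (sh l ` {1..L})" thus "x \<in> {1..L+1}" using l by (auto simp: sh_def)
  next
    fix x assume x: "x \<in> {1..L+1}"
    show "x \<in> insert l (sh l ` {1..L})"
    proof (cases "x = l")
      case False
      show ?thesis
      proof (cases "x < l")
        case True then have "x = sh l x" "x \<in> {1..L}" using x l by (auto simp: sh_def)
        then show ?thesis by blast
      next
        case False2: False
        then have "x = sh l (x - 1)" "x - 1 \<in> {1..L}" using x l False by (auto simp: sh_def)
        then show ?thesis by blast
      qed
    qed simp
  qed
  finally have sz: "set z = {1..L+1}" .
  have d: "del_at i z = map (sh l) w" using z del_at_ins[OF il] by simp
  have zi: "z ! i = l" using z nth_ins[OF il] by simp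
  have nl: "l \<notin> set (map (sh l) w)" using sh_neq by (metis (full_types) imageE set_map)
  show "z \<in> {z. compress (del_at i z) = w \<and> z ! i \<notin> set (del_at i z)}
     \<inter> {z. length z = n \<and> set z = {1..card (set z)}}"
    using len sz d zi nl compress_sh[OF w(1)] by auto
qed




lemma count_map_sh: "count (mset (map (sh l) w)) (sh l x) = count (mset w) x"
  by (induction w) (auto simp: inj_eq[OF inj_sh])

lemma h_old:
  assumes "j \<in> set w"
  shows "(\<Prod>y\<in>set (ins i j w). F (count (mset (ins i j w)) y))
       = F (Suc (count (mset w) j)) * (\<Prod>y\<in>set w - {j}. F (count (mset w) y))"
    "(\<Prod>y\<in>set w. F (count (mset w) y)) = F (count (mset w) j) * (\<Prod>y\<in>set w - {j}. F (count (mset w) y))"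
proof -
  have s: "set (ins i j w) = set w" using assms by (auto simp: set_ins)
  have "(\<Prod>y\<in>set (ins i j w). F (count (mset (ins i j w)) y))
      = F (count (mset (ins i j w)) j) * (\<Prod>y\<in>set w - {j}. F (count (mset (ins i j w)) y))"
    unfolding s using assms by (simp add: prod.remove)
  also have "\<dots> = F (Suc (count (mset w) j)) * (\<Prod>y\<in>set w - {j}. F (count (mset w) y))"
    unfolding mset_ins by (intro arg_cong2[where f="(*)"] prod.cong refl) auto
  finally show "(\<Prod>y\<in>set (ins i j w). F (count (mset (ins i j w)) y))
       = F (Suc (count (mset w) j)) * (\<Prod>y\<in>set w - {j}. F (count (mset w) y))" .
  show "(\<Prod>y\<in>set w. F (count (mset w) y)) = F (count (mset w) j) * (\<Prod>y\<in>set w - {j}. F (count (mset w) y))"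
    using assms by (simp add: prod.remove)
qed

lemma h_new:
  "(\<Prod>y\<in>set (ins i l (map (sh l) w)). F (count (mset (ins i l (map (sh l) w))) y))
       = F 1 * (\<Prod>y\<in>set w. F (count (mset w) y))"
proof -
  have nl: "l \<notin> sh l ` set w" using sh_neq by (metis imageE)
  have c0: "count (mset (map (sh l) w)) l = 0"
    using nl by (simp only: count_mset_0_iff set_map) simp
  have c1: "count (add_mset l (mset (map (sh l) w))) l = 1"
    using c0 by (simp only: count_add_mset) simp
  have "(\<Prod>y\<in>set (ins i l (map (sh l) w)). F (count (mset (ins i l (map (sh l) w))) y))
     = (\<Prod>y\<in>insert l (sh l ` set w). F (count (add_mset l (mset (map (sh l) w))) y))"
    by (simp add: set_ins mset_ins)
  also have "\<dots> = F (count (add_mset l (mset (map (sh l) w))) l) *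
      (\<Prod>y\<in>sh l ` set w. F (count (add_mset l (mset (map (sh l) w))) y))"
    using nl by (simp add: prod.insert)
  also have "\<dots> = F 1 * (\<Prod>y\<in>sh l ` set w. F (count (add_mset l (mset (map (sh l) w))) y))"
    by (simp only: c1)
  also have "(\<Prod>y\<in>sh l ` set w. F (count (add_mset l (mset (map (sh l) w))) y))
      = (\<Prod>y\<in>sh l ` set w. F (count (mset (map (sh l) w)) y))"
    using nl by (intro prod.cong refl) auto
  also have "\<dots> = (\<Prod>x\<in>set w. F (count (mset (map (sh l) w)) (sh l x)))"
    by (subst prod.reindex) (auto intro: inj_on_subset[OF inj_sh])
  also have "\<dots> = (\<Prod>x\<in>set w. F (count (mset w) x))" by (simp only: count_map_sh)
  finally show ?thesis .
qed





theorem mainTheorem6: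
  fixes r p :: real and n i :: nat and w :: "nat list"
  assumes "0 < r" and "0 < p" and "p < 1" and "i < n"
    and "measure_pmf.prob (ESC n (ztnb_pmf r p)) {z. compress (del_at i z) = w} > 0"
  shows "\<exists>c>0.
     (\<forall>j\<in>{1..card (set w)}.
        measure_pmf.prob (ESC n (ztnb_pmf r p))
          {z. compress (del_at i z) = w \<and> (\<exists>m<length w. w ! m = j \<and> z ! i = del_at i z ! m)}
        / measure_pmf.prob (ESC n (ztnb_pmf r p)) {z. compress (del_at i z) = w}
        = c * (real (count (mset w) j) + r))
   \<and> measure_pmf.prob (ESC n (ztnb_pmf r p))
          {z. compress (del_at i z) = w \<and> z ! i \<notin> set (del_at i z)}
        / measure_pmf.prob (ESC n (ztnb_pmf r p)) {z. compress (del_at i z) = w}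
        = c * ((real (card (set w)) + 1) * ztnb_gamma r p * r)"
proof -
  note r = assms(1) and p = assms(2,3) and i = assms(4) and QT = assms(5)
  define M where "M = ztnb_pmf r p"
  define Fz where "Fz = (\<lambda>s. pmf M s * fact s)"
  define hz where "hz = (\<lambda>z::nat list. \<Prod>y\<in>set z. Fz (count (mset z) y))"
  define V where "V = {z::nat list. length z = n \<and> set z = {1..card (set z)}}"
  define D where "D = fact n * measure_pmf.prob (Pi_pmf {..<n} 0 (\<lambda>_. M)) (Eset n)"
  define Q where "Q = (\<lambda>B. measure_pmf.prob (ESC n M) B)"
  define g where "g = ztnb_gamma r p"
  have g: "g > 0" using ztnb_gamma_pos[OF r p] by (simp add: g_def)
  have Gr: "Gamma r > 0" using r by simp
  have rn: "r \<notin> \<int>\<^sub>\<le>\<^sub>0" using r nonpos_Ints_nonpos by fastforce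
  have pmfM: "pmf M s = ztnb_mu r p s" for s using pmf_ztnb[OF r p] by (simp add: M_def)
  have Fz_eq: "Fz s = g * Gamma (real s + r) * p ^ s / Gamma r" if "s \<ge> 1" for s
    using that by (simp add: Fz_def pmfM ztnb_mu_def g_def)
  have Fz_pos: "Fz s > 0" if "s \<ge> 1" for s
    using Fz_eq[OF that] g Gr p r by simp
  have Fz_Suc: "Fz (Suc s) = Fz s * ((real s + r) * p)" if "s \<ge> 1" for s
  proof -
    have rn': "real s + r \<notin> \<int>\<^sub>\<le>\<^sub>0" using r nonpos_Ints_nonpos by fastforce
    have "Gamma (real (Suc s) + r) = (real s + r) * Gamma (real s + r)"
      using Gamma_plus1[OF rn'] by (simp add: add_ac)
    thus ?thesis using Fz_eq[OF that] Fz_eq[of "Suc s"] by (simp add: field_simps)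
  qed
  have Fz1: "Fz 1 = g * r * p"
  proof -
    have "Gamma (1 + r) = r * Gamma r" using Gamma_plus1[OF rn] by (simp add: add_ac)
    thus ?thesis using Fz_eq[of 1] Gr by (simp add: field_simps)
  qed
  have M0: "pmf M 0 = 0" by (simp add: pmfM ztnb_mu_def)
  have M1: "pmf M 1 > 0" using Fz_pos[of 1] by (simp add: Fz_def)
  have pmfE: "pmf (ESC n M) z = (if z \<in> V then hz z / D else 0)" for z
    using pmf_ESC[OF M0 M1, of n z] by (simp add: V_def hz_def Fz_def D_def)
  have finV: "finite V"
  proof (rule finite_subset)
    show "V \<subseteq> {xs. set xs \<subseteq> {..n} \<and> length xs = n}"
    proof
      fix z assume "z \<in> V"
      hence z: "length z = n" "set z = {1..card (set z)}" by (simp_all add: V_def)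
      have "card (set z) \<le> n" using card_length[of z] z by simp
      have "set z \<subseteq> {1..card (set z)}" using z(2) by simp
      also have "\<dots> \<subseteq> {..n}" using \<open>card (set z) \<le> n\<close> by auto
      finally have "set z \<subseteq> {..n}" .
      with z show "z \<in> {xs. set xs \<subseteq> {..n} \<and> length xs = n}" by simp
    qed
  qed (rule finite_lists_length_eq, simp)
  have QB: "Q B = (\<Sum>z\<in>B \<inter> V. hz z) / D" for B
  proof -
    have "Q B = Q (B \<inter> V)" unfolding Q_def
      by (rule measure_prob_cong_0) (auto simp: pmfE)
    also have "\<dots> = (\<Sum>z\<in>B \<inter> V. pmf (ESC n M) z)"
      unfolding Q_def using finV by (simp add: measure_measure_pmf_finite)
    also have "\<dots> = (\<Sum>z\<in>B \<inter> V. hz z / D)" by (intro sum.cong) (auto simp: pmfE)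
    finally show ?thesis by (simp add: sum_divide_distrib)
  qed
  define T where "T = {z. compress (del_at i z) = w}"
  have QT': "Q T > 0" using QT by (simp add: Q_def T_def M_def)
  have "T \<inter> V \<noteq> {}"
  proof
    assume "T \<inter> V = {}" then have "Q T = 0" by (simp add: QB)
    with QT' show False by simp
  qed
  then obtain z0 where z0: "z0 \<in> T" "z0 \<in> V" by blast
  define L where "L = card (set w)"
  have wv: "set w = {1..L}" "length w = n - 1"
    using w_valid[of z0 n i w] z0 i by (auto simp: V_def T_def L_def)
  have Dnn: "D \<ge> 0" by (simp add: D_def)
  have hnn: "hz z \<ge> 0" for z
    unfolding hz_def by (intro prod_nonneg) (auto simp: Fz_def)
  have Dpos: "D > 0"
  proof (rule ccontr)
    assume "\<not> D > 0" then have "D = 0" using Dnn by simp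
    then have "Q T = 0" by (simp add: QB)
    with QT' show False by simp
  qed
  have hw: "hz w > 0"
    unfolding hz_def by (intro prod_pos Fz_pos) (simp add: Suc_le_eq)
  define c where "c = p * hz w / (D * Q T)"
  have cpos: "c > 0" using p hw Dpos QT' by (simp add: c_def)
  have Ej: "Q {z. compress (del_at i z) = w \<and> (\<exists>m<length w. w ! m = j \<and> z ! i = del_at i z ! m)}
      = hz w * ((real (count (mset w) j) + r) * p) / D" if j: "j \<in> {1..L}" for j
  proof -
    have jw: "j \<in> set w" using j wv by simp
    have cj: "count (mset w) j \<ge> 1" using jw by (simp add: Suc_le_eq)
    have "Q {z. compress (del_at i z) = w \<and> (\<exists>m<length w. w ! m = j \<and> z ! i = del_at i z ! m)}
        = hz (ins i j w) / D"
      using Ej_char[OF wv i j] by (simp add: QB V_def)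
    also have "hz (ins i j w) = hz w * ((real (count (mset w) j) + r) * p)"
      unfolding hz_def h_old[OF jw] Fz_Suc[OF cj] by simp
    finally show ?thesis .
  qed
  have New: "Q {z. compress (del_at i z) = w \<and> z ! i \<notin> set (del_at i z)}
      = (real L + 1) * (g * r * p) * hz w / D"
  proof -
    have il: "i \<le> length w" using wv i by simp
    have inj: "inj_on (\<lambda>l. ins i l (map (sh l) w)) {1..L+1}"
    proof (rule inj_onI)
      fix a b assume "ins i a (map (sh a) w) = ins i b (map (sh b) w)"
      hence "ins i a (map (sh a) w) ! i = ins i b (map (sh b) w) ! i" by simp
      thus "a = b" using il by (simp add: nth_ins)
    qed
    have "Q {z. compress (del_at i z) = w \<and> z ! i \<notin> set (del_at i z)}
        = (\<Sum>z\<in>(\<lambda>l. ins i l (map (sh l) w)) ` {1..L+1}. hz z) / D"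
      using New_char[OF wv i] by (simp add: QB V_def)
    also have "(\<Sum>z\<in>(\<lambda>l. ins i l (map (sh l) w)) ` {1..L+1}. hz z)
        = (\<Sum>l\<in>{1..L+1}. hz (ins i l (map (sh l) w)))"
      by (rule sum.reindex[OF inj, unfolded comp_def])
    also have "\<dots> = (\<Sum>l\<in>{1..L+1}. Fz 1 * hz w)"
      unfolding hz_def by (intro sum.cong refl) (rule h_new)
    also have "\<dots> = (real L + 1) * (g * r * p) * hz w"
      using Fz1 by (simp add: algebra_simps)
    finally show ?thesis .
  qed
  show ?thesis
  proof (intro exI[of _ c] conjI cpos ballI)
    fix j assume j: "j \<in> {1..card (set w)}"
    have "Q {z. compress (del_at i z) = w \<and> (\<exists>m<length w. w ! m = j \<and> z ! i = del_at i z ! m)} / Q T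
       = c * (real (count (mset w) j) + r)"
      using Ej[of j] j QT' Dpos by (simp add: L_def c_def field_simps)
    thus "measure_pmf.prob (ESC n (ztnb_pmf r p))
          {z. compress (del_at i z) = w \<and> (\<exists>m<length w. w ! m = j \<and> z ! i = del_at i z ! m)}
        / measure_pmf.prob (ESC n (ztnb_pmf r p)) {z. compress (del_at i z) = w}
        = c * (real (count (mset w) j) + r)" by (simp add: Q_def M_def T_def)
  next
    have "Q {z. compress (del_at i z) = w \<and> z ! i \<notin> set (del_at i z)} / Q T
       = c * ((real (card (set w)) + 1) * ztnb_gamma r p * r)"
      using New QT' Dpos by (simp add: L_def c_def g_def field_simps)
    thus "measure_pmf.prob (ESC n (ztnb_pmf r p))
          {z. compress (del_at i z) = w \<and> z ! i \<notin> set (del_at i z)}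
        / measure_pmf.prob (ESC n (ztnb_pmf r p)) {z. compress (del_at i z) = w}
        = c * ((real (card (set w)) + 1) * ztnb_gamma r p * r)" by (simp add: Q_def M_def T_def)
  qed
qed


end
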